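(* Let $e=2.718281\ldots$ be Euler's number, and let $s_k/t_k$, $k\ge 0$, be the convergents of its regular continued fraction expansion. Then the Jacobi sequence of $e$ is purely periodic with period length $24$, i.e. $$\left(\frac{s_k}{t_k}\right)=\left(\frac{s_{k+24}}{t_{k+24}}\right)\quad\text{for all } k\ge 0,$$ and $24$ is the smallest positive integer $L$ with $\left(\frac{s_k}{t_k}\right)=\left(\frac{s_{k+L}}{t_{k+L}}\right)$ for all $k\ge 0$.
   Context: For $x\in\mathbb{R}\setminus\mathbb{Q}$ with regular continued fraction expansion $x=[a_0,a_1,a_2,\ldots]$ ($a_0\in\mathbb{Z}$, $a_i\ge 1$ for $i\ge1$), the convergents $s_k/t_k$ are defined by $s_{-1}=1$, $s_0=a_0$, $s_k=a_ks_{k-1}+s_{k-2}$ and $t_{-1}=0$, $t_0=1$, $t_k=a_kt_{k-1}+t_{k-2}$ for $k\ge1$. For an odd natural number $n$ and an integer $m$ coprime to $n$, $\left(\frac{m}{n}\right)$ is the usual Jacobi symbol (equal to $1$ when $n=1$, e.g. $m=0,n=1$). If $n$ is even and $\gcd(m,n)=1$, one sets $\left(\frac{m}{n}\right)=*$, where $*$ is a fixed symbol different from $\pm1$. The Jacobi sequence of $x$ is the sequence $\left(\frac{s_k}{t_k}\right)$, $k\ge 0$, with values in $\{1,-1,*\}$. *)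

theory Defs
  imports Complex_Main "HOL-Number_Theory.Number_Theory"
begin

fun cf_rem :: "real \<Rightarrow> nat \<Rightarrow> real" where
  "cf_rem x 0 = x"
| "cf_rem x (Suc k) = 1 / (cf_rem x k - of_int \<lfloor>cf_rem x k\<rfloor>)"

definition cf_a :: "real \<Rightarrow> nat \<Rightarrow> int" where
  "cf_a x k = \<lfloor>cf_rem x k\<rfloor>"

text \<open>Numerators s_k and denominators t_k of the convergents, with
  s_(-1) = 1, s_0 = a_0, t_(-1) = 0, t_0 = 1 built in.\<close>

fun cf_s :: "real \<Rightarrow> nat \<Rightarrow> int" where
  "cf_s x 0 = cf_a x 0"
| "cf_s x (Suc 0) = cf_a x 1 * cf_a x 0 + 1"
| "cf_s x (Suc (Suc k)) = cf_a x (Suc (Suc k)) * cf_s x (Suc k) + cf_s x k"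

fun cf_t :: "real \<Rightarrow> nat \<Rightarrow> int" where
  "cf_t x 0 = 1"
| "cf_t x (Suc 0) = cf_a x 1"
| "cf_t x (Suc (Suc k)) = cf_a x (Suc (Suc k)) * cf_t x (Suc k) + cf_t x k"

definition jacobi :: "int \<Rightarrow> int \<Rightarrow> int" where
  "jacobi m n = prod_mset (image_mset (\<lambda>p. Legendre m (int p)) (prime_factorization (nat n)))"

text \<open>Extended symbol with values in {1,-1,*}: None encodes the symbol *
  (used when n is even); Some j encodes the Jacobi symbol j.\<close>

definition jac_sym :: "int \<Rightarrow> int \<Rightarrow> int option" where
  "jac_sym m n = (if even n then None else Some (jacobi m n))"

definition jacobi_seq :: "real \<Rightarrow> nat \<Rightarrow> int option" where
  "jacobi_seq x k = jac_sym (cf_s x k) (cf_t x k)"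

end

theory Submission
  imports Defs "HOL-Analysis.Analysis"
begin


lemma cong_small_eq:
  fixes x y p :: int
  assumes "p > 2" "x \<in> {-1,0,1}" "y \<in> {-1,0,1}" "[x = y] (mod p)"
  shows "x = y"
proof -
  have "p dvd (x - y)" using assms(4) by (simp add: cong_iff_dvd_diff)
  moreover have "-1 \<le> x" "x \<le> 1" "-1 \<le> y" "y \<le> 1" using assms(2,3) by auto
  then have "\<bar>x - y\<bar> < p" using assms(1) by linarith
  ultimately show ?thesis
    using dvd_imp_le_int[of "x - y" p] assms(1) by fastforce
qed


lemma leg_vals: "Legendre a p \<in> {-1,0,1}"
  by (auto simp: Legendre_def)

lemma leg_mult:
  assumes "prime p" "2 < p"
  shows "Legendre (a*b) (int p) = Legendre a (int p) * Legendre b (int p)"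
proof -
  have "[Legendre (a*b) (int p) = (a*b) ^ ((p - 1) div 2)] (mod int p)"
    by (rule euler_criterion[OF assms])
  moreover have "[Legendre a (int p) * Legendre b (int p) = a ^ ((p - 1) div 2) * b ^ ((p - 1) div 2)] (mod int p)"
    by (intro cong_mult euler_criterion[OF assms])
  ultimately have "[Legendre (a*b) (int p) = Legendre a (int p) * Legendre b (int p)] (mod int p)"
    by (metis cong_sym cong_trans power_mult_distrib)
  moreover have "Legendre a (int p) * Legendre b (int p) \<in> {-1,0,1}"
    using leg_vals[of a "int p"] leg_vals[of b "int p"] by auto
  moreover have "int p > 2" using assms(2) by simp
  ultimately show ?thesis using cong_small_eq[of "int p"] leg_vals by blast
qed

lemma leg_cong:
  assumes "prime p" "2 < p" "[a = b] (mod int p)"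
  shows "Legendre a (int p) = Legendre b (int p)"
proof -
  have "[Legendre a (int p) = a ^ ((p - 1) div 2)] (mod int p)"
    by (rule euler_criterion[OF assms(1,2)])
  moreover have "[Legendre b (int p) = b ^ ((p - 1) div 2)] (mod int p)"
    by (rule euler_criterion[OF assms(1,2)])
  moreover have "[a ^ ((p - 1) div 2) = b ^ ((p - 1) div 2)] (mod int p)"
    using assms(3) by (rule cong_pow)
  ultimately have "[Legendre a (int p) = Legendre b (int p)] (mod int p)"
    by (metis cong_sym cong_trans)
  moreover have "int p > 2" using assms(2) by simp
  ultimately show ?thesis using cong_small_eq[of "int p"] leg_vals by blast
qed

lemma odd_half_even: "odd (p::nat) \<Longrightarrow> even ((p - 1) div 2) = (p mod 4 = 1)"
  by presburger

lemma leg_neg1: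
  assumes "prime p" "2 < p"
  shows "Legendre (-1) (int p) = (if p mod 4 = 1 then 1 else -1)"
proof -
  have "[Legendre (-1) (int p) = (-1) ^ ((p - 1) div 2)] (mod int p)"
    by (rule euler_criterion[OF assms])
  moreover have "odd p" using assms prime_odd_nat by blast
  moreover have "((-1::int) ^ ((p - 1) div 2)) = (if p mod 4 = 1 then 1 else -1)"
    using odd_half_even[OF \<open>odd p\<close>] by auto
  ultimately have "[Legendre (-1) (int p) = (if p mod 4 = 1 then 1 else -1)] (mod int p)" by simp
  moreover have "int p > 2" using assms(2) by simp
  moreover have "(if p mod 4 = 1 then 1 else -1::int) \<in> {-1,0,1}" by simp
  ultimately show ?thesis using cong_small_eq[of "int p"] leg_vals by blast
qed

lemma leg_unit:
  assumes "prime p" "\<not> int p dvd a"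
  shows "Legendre a (int p) \<in> {-1,1}"
  using assms by (auto simp: Legendre_def cong_0_iff)

lemma jac_1 [simp]: "jacobi m 1 = 1"
  by (simp add: jacobi_def)

lemma jac_prime: "prime P \<Longrightarrow> jacobi m (int P) = Legendre m (int P)"
  by (simp add: jacobi_def prime_factorization_prime)

lemma jac_mult_bot:
  "A \<noteq> 0 \<Longrightarrow> B \<noteq> 0 \<Longrightarrow> jacobi m (int A * int B) = jacobi m (int A) * jacobi m (int B)"
  by (simp add: jacobi_def nat_mult_distrib prime_factorization_mult)

lemma odd_prime_gt2: "prime (p::nat) \<Longrightarrow> odd p \<Longrightarrow> 2 < p"
  using prime_ge_2_nat[of p] by (cases "p = 2") auto

lemma leg_one: "prime (p::nat) \<Longrightarrow> Legendre 1 (int p) = 1"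
proof -
  assume "prime p"
  then have "\<not> [1 = 0] (mod int p)"
    by (metis cong_0_iff int_one_le_iff_zero_less nat_int not_prime_1 of_nat_1 zdvd1_eq prime_gt_0_nat nat_dvd_1_iff_1 of_nat_dvd_iff)
  moreover have "QuadRes (int p) 1" unfolding QuadRes_def by (rule exI[of _ 1]) simp
  ultimately show ?thesis by (simp add: Legendre_def)
qed

lemma jac_one_top: "jacobi 1 (int N) = 1"
proof (induction N rule: prime_divisors_induct)
  case zero then show ?case by (simp add: jacobi_def)
next
  case (unit x) then show ?case by simp
next
  case (factor p x)
  show ?case
  proof (cases "x = 0")
    case True then show ?thesis by (simp add: jacobi_def)
  next
    case False
    have "p \<noteq> 0" using factor(1) by auto
    then show ?thesis using jac_mult_bot[of p x 1] factor False jac_prime leg_one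
      by (simp del: of_nat_mult add: of_nat_mult[symmetric])
  qed
qed

lemma jac_mult_top: "odd N \<Longrightarrow> jacobi (a*b) (int N) = jacobi a (int N) * jacobi b (int N)"
proof (induction N rule: prime_divisors_induct)
  case zero then show ?case by simp
next
  case (unit x) then show ?case by simp
next
  case (factor p x)
  then have op: "odd p" and ox: "odd x" by auto
  have p2: "2 < p" using odd_prime_gt2 factor(1) op by blast
  have nz: "p \<noteq> 0" "x \<noteq> 0" using op ox by (auto intro: odd_pos)
  have "jacobi (a*b) (int (p*x)) = jacobi (a*b) (int p) * jacobi (a*b) (int x)"
    using jac_mult_bot[OF nz] by simp
  also have "\<dots> = (jacobi a (int p) * jacobi b (int p)) * (jacobi a (int x) * jacobi b (int x))"
    using factor.IH ox jac_prime[OF factor(1)] leg_mult[OF factor(1) p2] by simp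
  also have "\<dots> = jacobi a (int (p*x)) * jacobi b (int (p*x))"
    using jac_mult_bot[OF nz] by simp
  finally show ?case .
qed

lemma jac_cong: "odd N \<Longrightarrow> [a = b] (mod int N) \<Longrightarrow> jacobi a (int N) = jacobi b (int N)"
proof (induction N rule: prime_divisors_induct)
  case zero then show ?case by simp
next
  case (unit x) then show ?case by simp
next
  case (factor p x)
  then have op: "odd p" and ox: "odd x" by auto
  have p2: "2 < p" using odd_prime_gt2 factor(1) op by blast
  have nz: "p \<noteq> 0" "x \<noteq> 0" using op ox by (auto intro: odd_pos)
  have c1: "[a = b] (mod int p)" "[a = b] (mod int x)"
    using factor.prems(2) by (auto intro: cong_dvd_modulus)
  show ?case
    using jac_mult_bot[OF nz, of a] jac_mult_bot[OF nz, of b] factor.IH[OF ox c1(2)]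
      jac_prime[OF factor(1)] leg_cong[OF factor(1) p2 c1(1)] by simp
qed

lemma mod4_mult: "odd (p::nat) \<Longrightarrow> odd x \<Longrightarrow>
   (if (p*x) mod 4 = 1 then 1 else -1::int) = (if p mod 4 = 1 then 1 else -1)*(if x mod 4 = 1 then 1 else -1)"
proof -
  assume "odd p" "odd x"
  then have "p mod 4 = 1 \<or> p mod 4 = 3" "x mod 4 = 1 \<or> x mod 4 = 3" by presburger+
  moreover have "(p*x) mod 4 = ((p mod 4)*(x mod 4)) mod 4" by (simp add: mod_mult_eq)
  ultimately show ?thesis by auto
qed

lemma jac_neg1: "odd N \<Longrightarrow> jacobi (-1) (int N) = (if N mod 4 = 1 then 1 else -1)"
proof (induction N rule: prime_divisors_induct)
  case zero then show ?case by simp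
next
  case (unit x) then show ?case by simp
next
  case (factor p x)
  then have op: "odd p" and ox: "odd x" by auto
  have p2: "2 < p" using odd_prime_gt2 factor(1) op by blast
  have nz: "p \<noteq> 0" "x \<noteq> 0" using op ox by (auto intro: odd_pos)
  show ?case
    using jac_mult_bot[OF nz, of "-1"] factor.IH[OF ox] mod4_mult[OF op ox]
      jac_prime[OF factor(1)] leg_neg1[OF factor(1) p2] by simp
qed

lemma jac_unit: "odd N \<Longrightarrow> coprime a (int N) \<Longrightarrow> jacobi a (int N) \<in> {-1,1}"
proof (induction N rule: prime_divisors_induct)
  case zero then show ?case by simp
next
  case (unit x) then show ?case by simp
next
  case (factor p x)
  then have op: "odd p" and ox: "odd x" by auto
  have nz: "p \<noteq> 0" "x \<noteq> 0" using op ox by (auto intro: odd_pos)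
  have cp: "coprime a (int p)" "coprime a (int x)" using factor.prems(2) by auto
  have "\<not> int p dvd a"
  proof
    assume "int p dvd a"
    then have "int p dvd gcd a (int p)" by simp
    then show False using cp(1) factor(1)
      by (metis coprime_iff_gcd_eq_1 int_ops(2) nat_dvd_1_iff_1 not_prime_1 of_nat_dvd_iff)
  qed
  then have "Legendre a (int p) \<in> {-1,1}" using leg_unit factor(1) by blast
  then show ?case
    using jac_mult_bot[OF nz, of a] factor.IH[OF ox cp(2)] jac_prime[OF factor(1)] by auto
qed




definition psi :: "int \<Rightarrow> int \<Rightarrow> int" where
  "psi m n = (if m mod 4 = 3 \<and> n mod 4 = 3 then -1 else 1)"

lemma psi_sym: "psi a b = psi b a"
  by (auto simp: psi_def)

lemma psi_mult: "odd b \<Longrightarrow> odd c \<Longrightarrow> psi a (b*c) = psi a b * psi a c"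
proof -
  assume "odd b" "odd c"
  then have "b mod 4 = 1 \<or> b mod 4 = 3" "c mod 4 = 1 \<or> c mod 4 = 3" by presburger+
  moreover have "(b*c) mod 4 = ((b mod 4)*(c mod 4)) mod 4" by (simp add: mod_mult_eq)
  ultimately show ?thesis by (auto simp: psi_def)
qed

lemma QR_psi:
  assumes "prime p" "prime q" "2 < p" "2 < q" "p \<noteq> q"
  shows "Legendre (int p) (int q) * Legendre (int q) (int p) = psi (int p) (int q)"
proof -
  have op: "odd p" "odd q" using assms prime_odd_nat by blast+
  have "Legendre (int p) (int q) * Legendre (int q) (int p) = (-1::int) ^ ((p - 1) div 2 * ((q - 1) div 2))"
    using Quadratic_Reciprocity[OF assms(1,3,2,4,5)] by simp
  also have "\<dots> = psi (int p) (int q)"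
  proof -
    have e: "even ((p - 1) div 2 * ((q - 1) div 2)) \<longleftrightarrow> (p mod 4 = 1 \<or> q mod 4 = 1)"
      using odd_half_even[OF op(1)] odd_half_even[OF op(2)] by simp
    have "p mod 4 = 1 \<or> p mod 4 = 3" "q mod 4 = 1 \<or> q mod 4 = 3" using op by presburger+
    moreover have "int p mod 4 = int (p mod 4)" "int q mod 4 = int (q mod 4)" by (simp_all add: zmod_int)
    ultimately show ?thesis using e by (auto simp: psi_def)
  qed
  finally show ?thesis .
qed

lemma jac_recip_prime:
  assumes "prime P" "2 < P"
  shows "odd N \<Longrightarrow> coprime (int P) (int N) \<Longrightarrow>
    jacobi (int P) (int N) * jacobi (int N) (int P) = psi (int P) (int N)"
proof (induction N rule: prime_divisors_induct)
  case zero then show ?case by simp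
next
  case (unit x) then show ?case using jac_prime[OF assms(1)] leg_one[OF assms(1)] by (simp add: psi_def)
next
  case (factor q x)
  then have oq: "odd q" and ox: "odd x" by auto
  have q2: "2 < q" using odd_prime_gt2 factor(1) oq by blast
  have nz: "q \<noteq> 0" "x \<noteq> 0" using oq ox by (auto intro: odd_pos)
  have cp: "coprime (int P) (int q)" "coprime (int P) (int x)" using factor.prems(2) by auto
  have "q \<noteq> P" using cp(1) assms(1) by auto
  have "jacobi (int P) (int (q*x)) * jacobi (int (q*x)) (int P)
     = (Legendre (int P) (int q) * Legendre (int q) (int P)) * (jacobi (int P) (int x) * jacobi (int x) (int P))"
    using jac_mult_bot[OF nz, of "int P"] jac_prime[OF factor(1)] jac_prime[OF assms(1)]
      leg_mult[OF assms(1,2), of "int q" "int x"] by simp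
  also have "\<dots> = psi (int P) (int q) * psi (int P) (int x)"
    using QR_psi[OF assms(1) factor(1) assms(2) q2] \<open>q \<noteq> P\<close> factor.IH[OF ox cp(2)] by simp
  also have "\<dots> = psi (int P) (int (q*x))"
    using psi_mult[of "int q" "int x" "int P"] oq ox by simp
  finally show ?case .
qed

lemma jac_recip:
  "odd M \<Longrightarrow> odd N \<Longrightarrow> coprime (int M) (int N) \<Longrightarrow>
    jacobi (int M) (int N) * jacobi (int N) (int M) = psi (int M) (int N)"
proof (induction M rule: prime_divisors_induct)
  case zero then show ?case by simp
next
  case (unit x) then show ?case using jac_one_top by (simp add: psi_def)
next
  case (factor p x)
  then have op: "odd p" and ox: "odd x" by auto
  have p2: "2 < p" using odd_prime_gt2 factor(1) op by blast
  have nz: "p \<noteq> 0" "x \<noteq> 0" using op ox by (auto intro: odd_pos)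
  have cp: "coprime (int p) (int N)" "coprime (int x) (int N)" using factor.prems(3) by auto
  have "jacobi (int (p*x)) (int N) * jacobi (int N) (int (p*x))
     = (jacobi (int p) (int N) * jacobi (int N) (int p)) * (jacobi (int x) (int N) * jacobi (int N) (int x))"
    using jac_mult_bot[OF nz, of "int N"] jac_mult_top[OF factor.prems(2), of "int p" "int x"] by simp
  also have "\<dots> = psi (int p) (int N) * psi (int x) (int N)"
    using jac_recip_prime[OF factor(1) p2 factor.prems(2) cp(1)] factor.IH[OF ox factor.prems(2) cp(2)] by simp
  also have "\<dots> = psi (int (p*x)) (int N)"
    using psi_mult[of "int p" "int x" "int N"] op ox by (simp add: psi_sym)
  finally show ?case .
qed

lemma pm1_cases: "(a::int) \<in> {-1,1} \<Longrightarrow> b \<in> {-1,1} \<Longrightarrow> c \<in> {-1,1} \<Longrightarrow> a * b * c = 1 \<Longrightarrow> b = a * c"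
  by auto

lemma jac_two: "odd N \<Longrightarrow> jacobi 2 (int N) = (if N mod 8 = 1 \<or> N mod 8 = 7 then 1 else -1)"
proof -
  have "\<And>i. jacobi 2 (int (2*i+1)) = (if (2*i+1) mod 8 = 1 \<or> (2*i+1) mod 8 = 7 then 1 else -1)"
  proof -
    fix i show "jacobi 2 (int (2*i+1)) = (if (2*i+1) mod 8 = 1 \<or> (2*i+1) mod 8 = 7 then 1 else -1)"
    proof (induction i)
      case 0 then show ?case by simp
    next
      case (Suc i)
      define N where "N = 2*i+1"
      have oN: "odd N" "odd (N+2)" unfolding N_def by auto
      have eq: "2 * Suc i + 1 = N + 2" unfolding N_def by simp
      have cop: "coprime (int N) (int (N+2))"
      proof -
        have "[int N + 2 = 2] (mod int N)" by (simp add: Cong.cong_def)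
        moreover have "coprime (int N) 2" using oN by simp
        ultimately show ?thesis
          by (metis cong_imp_coprime cong_sym coprime_commute of_nat_add of_nat_numeral)
      qed
      have r: "jacobi (int N) (int (N+2)) * jacobi (int (N+2)) (int N) = 1"
      proof -
        have "\<not> (int N mod 4 = 3 \<and> int (N+2) mod 4 = 3)" by presburger
        then show ?thesis using jac_recip[OF oN cop] by (simp add: psi_def)
      qed
      have a: "jacobi (int (N+2)) (int N) = jacobi 2 (int N)"
        by (rule jac_cong[OF oN(1)]) (simp add: Cong.cong_def)
      have b: "jacobi (int N) (int (N+2)) = jacobi (-1) (int (N+2)) * jacobi 2 (int (N+2))"
      proof -
        have "[int N = (-1) * 2] (mod int (N+2))" by (simp add: cong_iff_dvd_diff add.commute)
        then show ?thesis using jac_cong[OF oN(2)] jac_mult_top[OF oN(2)] by metis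
      qed
      have u1: "jacobi (-1) (int (N+2)) \<in> {-1,1}" using jac_unit[OF oN(2)] by simp
      have u2: "jacobi 2 (int (N+2)) \<in> {-1,1}" using jac_unit[OF oN(2)] oN by simp
      have u3: "jacobi 2 (int N) \<in> {-1,1}" using jac_unit[OF oN(1)] oN by simp
      have "jacobi 2 (int (N+2)) = jacobi (-1) (int (N+2)) * jacobi 2 (int N)"
        using pm1_cases[OF u1 u2 u3] r a b by (simp add: mult.assoc)
      moreover have "N mod 8 = 1 \<or> N mod 8 = 3 \<or> N mod 8 = 5 \<or> N mod 8 = 7" using oN by presburger
      moreover have "(N+2) mod 4 = 1 \<longleftrightarrow> N mod 8 = 3 \<or> N mod 8 = 7" by presburger
      moreover have "(N+2) mod 8 = (N mod 8 + 2) mod 8" by presburger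
      ultimately show ?case using Suc.IH jac_neg1[OF oN(2)] unfolding eq N_def[symmetric] by auto
    qed
  qed
  moreover assume "odd N"
  then obtain i where "N = 2*i+1" using oddE by blast
  ultimately show ?thesis by simp
qed




lemma int_cases_pos: assumes "(n::int) > 0" obtains N where "n = int N" "N > 0"
  using assms by (metis pos_int_cases)

lemma jacI_mult_top: "n > 0 \<Longrightarrow> odd n \<Longrightarrow> jacobi (a*b) n = jacobi a n * jacobi b n"
  by (elim int_cases_pos) (simp add: jac_mult_top)

lemma jacI_cong: "n > 0 \<Longrightarrow> odd n \<Longrightarrow> [a = b] (mod n) \<Longrightarrow> jacobi a n = jacobi b n"
  by (elim int_cases_pos) (simp add: jac_cong)

lemma jacI_unit: "n > 0 \<Longrightarrow> odd n \<Longrightarrow> coprime a n \<Longrightarrow> jacobi a n \<in> {-1,1}"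
proof (elim int_cases_pos)
  fix N assume "n = int N" "odd n" "coprime a n"
  then show ?thesis using jac_unit[of N a] by simp
qed

lemma jacI_neg1: "n > 0 \<Longrightarrow> odd n \<Longrightarrow> jacobi (-1) n = (if n mod 4 = 1 then 1 else -1)"
proof (elim int_cases_pos)
  fix N assume "n = int N" "odd n"
  moreover have "int N mod 4 = 1 \<longleftrightarrow> N mod 4 = 1" by presburger
  ultimately show ?thesis by (simp add: jac_neg1)
qed

lemma jacI_two: "n > 0 \<Longrightarrow> odd n \<Longrightarrow> jacobi 2 n = (if n mod 8 = 1 \<or> n mod 8 = 7 then 1 else -1)"
proof (elim int_cases_pos)
  fix N assume "n = int N" "odd n"
  moreover have "int N mod 8 = 1 \<longleftrightarrow> N mod 8 = 1" "int N mod 8 = 7 \<longleftrightarrow> N mod 8 = 7" by presburger+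
  ultimately show ?thesis by (simp add: jac_two)
qed

lemma jacI_recip: "m > 0 \<Longrightarrow> n > 0 \<Longrightarrow> odd m \<Longrightarrow> odd n \<Longrightarrow> coprime m n \<Longrightarrow>
   jacobi m n * jacobi n m = psi m n"
  by (elim int_cases_pos) (simp add: jac_recip)

lemma jacI_one: "n > 0 \<Longrightarrow> jacobi 1 n = 1"
  by (elim int_cases_pos) (simp add: jac_one_top)

lemma jac_4w:
  "\<And>w x z. nat w = W \<Longrightarrow> w > 0 \<Longrightarrow> x > 0 \<Longrightarrow> z > 0 \<Longrightarrow> odd x \<Longrightarrow> odd z \<Longrightarrow> coprime w x \<Longrightarrow>
     [z = x] (mod (4*w)) \<Longrightarrow> jacobi w z = jacobi w x"
proof (induction W rule: less_induct)
  case (less W w x z)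
  have c4: "[z = x] (mod 4)" "[z = x] (mod w)" using less.prems(8) by (auto intro: cong_dvd_modulus)
  show ?case
  proof (cases "odd w")
    case True
    have cz: "coprime w z"
      using cong_imp_coprime[OF cong_sym[OF c4(2)]] less.prems(7) by (simp add: coprime_commute)
    have r1: "jacobi w z * jacobi z w = psi w z"
      using jacI_recip[OF less.prems(2,4) True less.prems(6) cz] .
    have r2: "jacobi w x * jacobi x w = psi w x"
      using jacI_recip[OF less.prems(2,3) True less.prems(5,7)] .
    have e1: "jacobi z w = jacobi x w" using jacI_cong[OF less.prems(2) True c4(2)] .
    have e2: "psi w z = psi w x" using c4(1) by (simp add: psi_def Cong.cong_def)
    have u: "jacobi x w \<in> {-1,1}"
      using jacI_unit[OF less.prems(2) True] less.prems(7) by (simp add: coprime_commute)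
    from r1 r2 e1 e2 u show ?thesis by auto
  next
    case False
    then obtain w' where w': "w = 2*w'" by blast
    have w'p: "w' > 0" using less.prems(2) w' by simp
    have lt: "nat w' < W" using less.prems(1) w' w'p by simp
    have c8: "[z = x] (mod 8)" "[z = x] (mod (4*w'))" using less.prems(8) w' by (auto intro: cong_dvd_modulus)
    have cx: "coprime w' x" using less.prems(7) w' by simp
    have ih: "jacobi w' z = jacobi w' x"
      using less.IH[OF lt refl w'p less.prems(3,4,5,6) cx c8(2)] .
    have t2: "jacobi 2 z = jacobi 2 x"
      using c8(1) jacI_two[OF less.prems(4,6)] jacI_two[OF less.prems(3,5)] by (simp add: Cong.cong_def)
    show ?thesis
      using jacI_mult_top[OF less.prems(4,6), of 2 w'] jacI_mult_top[OF less.prems(3,5), of 2 w'] ih t2 w'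
      by simp
  qed
qed

lemma jac_top4:
  assumes "y > 0" "y mod 4 = 0" "x > 0" "z > 0" "odd x" "odd z" "coprime y x" "[z = x] (mod y)"
  shows "jacobi y z = jacobi y x"
proof -
  obtain w where w: "y = 4*w" using assms(2) by (metis dvd_def mod_0_imp_dvd)
  have wp: "w > 0" using assms(1) w by simp
  have sq: "jacobi 4 n = 1" if "n > 0" "odd n" for n
  proof -
    have "jacobi 2 n \<in> {-1,1}" using jacI_unit[OF that] that(2) by simp
    then show ?thesis using jacI_mult_top[OF that, of 2 2] by auto
  qed
  have "jacobi w z = jacobi w x"
    using jac_4w[OF refl wp assms(3,4,5,6)] assms(7,8) w by simp
  then show ?thesis
    using jacI_mult_top[OF assms(4,6), of 4 w] jacI_mult_top[OF assms(3,5), of 4 w] sq assms w by simp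
qed

definition Kp :: "int \<Rightarrow> int \<Rightarrow> int" where
  "Kp u v = (if odd v then jacobi u v else jacobi v u)"

lemma K_step:
  assumes "x > 0" "y > 0" "z = c*y + x" "c \<ge> 0" "coprime x y" "even y \<Longrightarrow> y mod 4 = 0"
  shows "Kp y z = (if odd y \<and> odd z then psi y z else 1) * Kp x y"
proof -
  have zp: "z > 0" using assms(1-4) by (smt (verit) mult_nonneg_nonneg)
  have cg: "[z = x] (mod y)" using assms(3) by (simp add: cong_iff_dvd_diff)
  have czy: "coprime z y"
    using cong_imp_coprime[OF cong_sym[OF cg]] assms(5) by simp
  show ?thesis
  proof (cases "odd y")
    case oy: True
    have jz: "jacobi z y = jacobi x y" using jacI_cong[OF assms(2) oy cg] .
    show ?thesis
    proof (cases "odd z")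
      case oz: True
      have r: "jacobi y z * jacobi z y = psi y z"
        using jacI_recip[OF assms(2) zp oy oz] czy by (simp add: coprime_commute)
      have u: "jacobi z y \<in> {-1,1}" using jacI_unit[OF assms(2) oy czy] .
      from r u jz oy oz show ?thesis by (auto simp: Kp_def)
    next
      case False
      then show ?thesis using jz oy by (simp add: Kp_def)
    qed
  next
    case ey: False
    then have y4: "y mod 4 = 0" using assms(6) by blast
    have oz: "odd z"
      using czy ey by (metis coprime_common_divisor dvd_refl even_mult_iff odd_one) 
    have ox: "odd x" using oz ey assms(3) by auto
    have "jacobi y z = jacobi y x"
      using jac_top4[OF assms(2) y4 assms(1) zp ox oz _ cg] assms(5) by (simp add: coprime_commute)
    then show ?thesis using ey oz by (simp add: Kp_def)
  qed
qed

lemma J_det: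
  assumes "t > 0" "odd t" "t' > 0" "coprime t' t" "s*t' - s'*t = d"
  shows "jacobi s t = jacobi d t * jacobi t' t"
proof -
  have "s*t' - d = s'*t" using assms(5) by linarith
  then have "[s*t' = d] (mod t)" by (simp add: cong_iff_dvd_diff)
  then have "jacobi (s*t') t = jacobi d t" using jacI_cong[OF assms(1,2)] by blast
  then have "jacobi s t * jacobi t' t = jacobi d t" using jacI_mult_top[OF assms(1,2)] by simp
  moreover have "jacobi t' t \<in> {-1,1}" using jacI_unit[OF assms(1,2,4)] .
  ultimately show ?thesis by auto
qed




lemma G_deriv:
  "((\<lambda>x. x^(Suc m) * (1-x)^(Suc k) * exp x) has_real_derivative
     (real (Suc m) * x^m * (1-x)^(Suc k) - real (Suc k) * x^(Suc m) * (1-x)^k + x^(Suc m)*(1-x)^(Suc k)) * exp x) (at x)"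
proof -
  have a: "((\<lambda>x. x^Suc m) has_real_derivative (1 + real m) * (1 * x^m)) (at x)"
    by (rule DERIV_power_Suc[OF DERIV_ident])
  have b: "((\<lambda>x. (1-x)^Suc k) has_real_derivative (1 + real k)*((-1)*(1-x)^k)) (at x)"
    by (rule DERIV_power_Suc) (auto intro!: derivative_eq_intros)
  have c: "((\<lambda>x. x^(Suc m) * (1-x)^(Suc k) * exp x) has_real_derivative
     ((1 + real m) * (1 * x^m) * (1-x)^Suc k + (1 + real k)*((-1)*(1-x)^k) * x^Suc m) * exp x + exp x * (x^(Suc m) * (1-x)^(Suc k))) (at x)"
    by (rule DERIV_mult[OF DERIV_mult[OF a b] DERIV_exp])
  show ?thesis
    by (rule DERIV_cong[OF c]) (simp add: algebra_simps)
qed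

definition u :: "nat \<Rightarrow> real \<Rightarrow> real" where
  "u k x = x^(k div 3 + k mod 3) * (1-x)^(k div 3 + 1) * exp x / fact (if k mod 3 = 0 then k div 3 else k div 3 + 1)"

lemma u0n: "u (3*n) x = x^n * (1-x)^(Suc n) * exp x / fact n"
  by (simp add: u_def)
lemma u1n: "u (3*n+1) x = x^(Suc n) * (1-x)^(Suc n) * exp x / fact (Suc n)"
proof -
  have a: "(3*n+1) div 3 = n" "(3*n+1) mod 3 = 1" by presburger+
  show ?thesis unfolding u_def a by simp
qed
lemma u2n: "u (3*n+2) x = x^(Suc (Suc n)) * (1-x)^(Suc n) * exp x / fact (Suc n)"
proof -
  have a: "(3*n+2) div 3 = n" "(3*n+2) mod 3 = 2" by presburger+
  show ?thesis unfolding u_def a by (simp add: numeral_2_eq_2)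
qed

definition aE :: "nat \<Rightarrow> int" where
  "aE k = (if k = 0 then 2 else if k mod 3 = 2 then 2 * int (k div 3 + 1) else 1)"

lemma aE_ge1: "aE k \<ge> 1"
  by (simp add: aE_def)

definition I :: "nat \<Rightarrow> real" where
  "I k = integral {0..1} (u k)"

lemma u_cont: "continuous_on {0..1} (u k)"
  unfolding u_def by (intro continuous_intros) auto

lemma u_hasint: "(u k has_integral I k) {0..1}"
  unfolding I_def using u_cont by (intro integrable_integral integrable_continuous_real)

lemma u_nonneg: "x \<in> {0..1} \<Longrightarrow> u k x \<ge> 0"
  unfolding u_def by auto

lemma I_pos: "I k > 0"
proof -
  have ge: "I k \<ge> 0" unfolding I_def
    using u_hasint u_nonneg by (intro integral_nonneg) (auto simp: I_def has_integral_integrable)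
  have "u k (1/2) > 0" unfolding u_def by simp
  then have "I k \<noteq> 0" unfolding I_def
    using integral_eq_0_iff[OF u_cont, of k] u_nonneg by force
  with ge show ?thesis by linarith
qed

lemma ftc01:
  assumes "\<And>x. (f has_real_derivative f' x) (at x)"
  shows "(f' has_integral (f 1 - f 0)) {0..1::real}"
  by (intro fundamental_theorem_of_calculus)
     (auto simp: has_real_derivative_iff_has_vector_derivative[symmetric] intro: has_field_derivative_at_within assms)

lemma I0: "I 0 = exp 1 - 2"
proof -
  have d: "\<And>x. ((\<lambda>x. (2 - x) * exp x) has_real_derivative u 0 x) (at x)"
  proof -
    fix x :: real
    have "((\<lambda>x. (2 - x) * exp x) has_real_derivative (-1) * exp x + exp x * (2 - x)) (at x)"
      by (rule DERIV_mult[OF _ DERIV_exp]) (auto intro!: derivative_eq_intros)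
    moreover have "(-1) * exp x + exp x * (2 - x) = u 0 x" using u0n[of 0 x] by (simp add: algebra_simps)
    ultimately show "((\<lambda>x. (2 - x) * exp x) has_real_derivative u 0 x) (at x)" by simp
  qed
  show ?thesis using has_integral_unique[OF u_hasint ftc01[OF d]] by simp
qed

lemma I1: "I 1 = 3 - exp 1"
proof -
  have d: "\<And>x. ((\<lambda>x. (3*x - x^2 - 3) * exp x) has_real_derivative u 1 x) (at x)"
  proof -
    fix x :: real
    have "((\<lambda>x. (3*x - x^2 - 3) * exp x) has_real_derivative (-2*x + 3) * exp x + exp x * (3*x - x^2 - 3)) (at x)"
      by (rule DERIV_mult[OF _ DERIV_exp]) (auto intro!: derivative_eq_intros)
    moreover have "(-2*x + 3) * exp x + exp x * (3*x - x^2 - 3) = u 1 x"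
      using u1n[of 0 x] by (simp add: algebra_simps power2_eq_square)
    ultimately show "((\<lambda>x. (3*x - x^2 - 3) * exp x) has_real_derivative u 1 x) (at x)" by simp
  qed
  show ?thesis using has_integral_unique[OF u_hasint ftc01[OF d]] by simp
qed

lemma aE2: "aE (3*n+2) = 2 * int (n+1)"
proof -
  have a: "(3*n+2) div 3 = n" "(3*n+2) mod 3 = 2" by presburger+
  show ?thesis unfolding aE_def a by simp
qed
lemma aE3: "aE (3*n+3) = 1" unfolding aE_def by presburger
lemma aE4: "aE (3*n+4) = 1" unfolding aE_def by presburger

lemma zero_int:
  assumes "\<And>x. (g has_real_derivative g' x) (at x)" "g 1 = 0" "g 0 = 0" "\<And>x. h x = c * g' x"
  shows "(h has_integral 0) {0..1::real}"
proof -
  have "((\<lambda>x. c * g' x) has_integral ((\<lambda>x. c * g x) 1 - (\<lambda>x. c * g x) 0)) {0..1::real}"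
    by (rule ftc01) (rule DERIV_cmult[OF assms(1)])
  moreover have "h = (\<lambda>x. c * g' x)" using assms(4) by auto
  ultimately show ?thesis using assms(2,3) by simp
qed



lemma alg0: "u (3*n+2) x + of_int (aE (3*n+2)) * u (3*n+1) x - u (3*n) x =
  (-1 / fact (Suc n)) * ((real (Suc n) * x^n * (1-x)^(Suc (Suc n)) - real (Suc (Suc n)) * x^(Suc n) * (1-x)^(Suc n) + x^(Suc n)*(1-x)^(Suc (Suc n))) * exp x)"
proof -
  have u0': "u (3*n) x = real (Suc n) * x^n * (1-x)^(Suc n) * exp x / fact (Suc n)"
    unfolding u0n by (simp add: field_simps del: of_nat_Suc)
  have p: "x^(Suc (Suc n)) * (1-x)^(Suc n) * exp x + of_int (2 * int (n+1)) * (x^(Suc n) * (1-x)^(Suc n) * exp x)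
     - real (Suc n) * x^n * (1-x)^(Suc n) * exp x =
     - ((real (Suc n) * x^n * (1-x)^(Suc (Suc n)) - real (Suc (Suc n)) * x^(Suc n) * (1-x)^(Suc n) + x^(Suc n)*(1-x)^(Suc (Suc n))) * exp x)"
    by (simp add: power_Suc algebra_simps)
  show ?thesis unfolding u0' u1n u2n aE2
    using arg_cong[OF p, of "\<lambda>t. t / fact (Suc n)"]
    by (simp add: diff_divide_distrib add_divide_distrib)
qed

lemma alg2: "u (3*n+4) x + of_int (aE (3*n+4)) * u (3*n+3) x - u (3*n+2) x =
  (1 / fact (Suc (Suc n))) * ((real (Suc (Suc n)) * x^(Suc n) * (1-x)^(Suc (Suc n)) - real (Suc (Suc n)) * x^(Suc (Suc n)) * (1-x)^(Suc n) + x^(Suc (Suc n))*(1-x)^(Suc (Suc n))) * exp x)"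
proof -
  have e: "3*n+4 = 3*(Suc n)+1" "3*n+3 = 3*(Suc n)" by simp_all
  have ua: "u (3*Suc n) x = real (Suc (Suc n)) * x^(Suc n) * (1-x)^(Suc (Suc n)) * exp x / fact (Suc (Suc n))"
    unfolding u0n by (simp add: field_simps del: of_nat_Suc)
  have ub: "u (3*n+2) x = real (Suc (Suc n)) * x^(Suc (Suc n)) * (1-x)^(Suc n) * exp x / fact (Suc (Suc n))"
    unfolding u2n by (simp add: field_simps del: of_nat_Suc)
  have p: "x^(Suc (Suc n)) * (1-x)^(Suc (Suc n)) * exp x + real (Suc (Suc n)) * x^(Suc n) * (1-x)^(Suc (Suc n)) * exp x
     - real (Suc (Suc n)) * x^(Suc (Suc n)) * (1-x)^(Suc n) * exp x =
     ((real (Suc (Suc n)) * x^(Suc n) * (1-x)^(Suc (Suc n)) - real (Suc (Suc n)) * x^(Suc (Suc n)) * (1-x)^(Suc n) + x^(Suc (Suc n))*(1-x)^(Suc (Suc n))) * exp x)"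
    by (simp add: algebra_simps)
  show ?thesis unfolding e ua u1n aE4[of n, unfolded e] ub
    using arg_cong[OF p, of "\<lambda>t. t / fact (Suc (Suc n))"]
    by (simp add: diff_divide_distrib add_divide_distrib)
qed

lemma alg1: "u (3*n+3) x + of_int (aE (3*n+3)) * u (3*n+2) x - u (3*n+1) x = 0"
proof -
  have e: "3*n+3 = 3*(Suc n)" by simp
  have p: "x^(Suc n) * (1-x)^(Suc (Suc n)) * exp x + x^(Suc (Suc n)) * (1-x)^(Suc n) * exp x
     - x^(Suc n) * (1-x)^(Suc n) * exp x = 0"
    by (simp add: power_Suc algebra_simps)
  show ?thesis unfolding aE3 unfolding e u0n u1n u2n
    using arg_cong[OF p, of "\<lambda>t. t / fact (Suc n)"]
    by (simp add: diff_divide_distrib add_divide_distrib)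
qed

lemma h_int0: "((\<lambda>x. u (k+2) x + of_int (aE (k+2)) * u (k+1) x - u k x) has_integral 0) {0..1}"
proof -
  obtain n r where k: "k = 3*n + r" "r < 3" by (metis div_mult_mod_eq mod_less_divisor zero_less_numeral mult.commute)
  then consider "r = 0" | "r = 1" | "r = 2" by linarith
  then show ?thesis
  proof cases
    case 1
    then have kk: "k+2 = 3*n+2" "k+1 = 3*n+1" "k = 3*n" using k by simp_all
    have "((\<lambda>x. u (3*n+2) x + of_int (aE (3*n+2)) * u (3*n+1) x - u (3*n) x) has_integral 0) {0..1}"
      by (rule zero_int[OF G_deriv[of n "Suc n"], where c="-1/fact (Suc n)"]) (simp, simp, rule alg0)
    then show ?thesis using kk by metis
  next
    case 2
    then have kk: "k+2 = 3*n+3" "k+1 = 3*n+2" "k = 3*n+1" using k by simp_all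
    have "((\<lambda>x. u (3*n+3) x + of_int (aE (3*n+3)) * u (3*n+2) x - u (3*n+1) x) has_integral 0) {0..1}"
      unfolding alg1 by (rule has_integral_0)
    then show ?thesis using kk by metis
  next
    case 3
    then have kk: "k+2 = 3*n+4" "k+1 = 3*n+3" "k = 3*n+2" using k by simp_all
    have "((\<lambda>x. u (3*n+4) x + of_int (aE (3*n+4)) * u (3*n+3) x - u (3*n+2) x) has_integral 0) {0..1}"
      by (rule zero_int[OF G_deriv[of "Suc n" "Suc n"], where c="1/fact (Suc (Suc n))"]) (simp, simp, rule alg2)
    then show ?thesis using kk by metis
  qed
qed

lemma I_rec: "I k = I (k+2) + of_int (aE (k+2)) * I (k+1)"
proof -
  have "((\<lambda>x. u (k+2) x + of_int (aE (k+2)) * u (k+1) x - u k x) has_integral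
          (I (k+2) + of_int (aE (k+2)) * I (k+1) - I k)) {0..1}"
    by (intro has_integral_diff has_integral_add has_integral_mult_right u_hasint)
  from has_integral_unique[OF this h_int0] show ?thesis by simp
qed

lemma I_lt: "I (k+1) < I k"
proof -
  have "of_int (aE (k+2)) * I (k+1) \<ge> I (k+1)"
    using aE_ge1[of "k+2"] I_pos[of "k+1"] by (simp add: mult_le_cancel_right1)
  then show ?thesis using I_rec[of k] I_pos[of "k+2"] by linarith
qed

definition R :: "nat \<Rightarrow> real" where
  "R k = of_int (aE (k+1)) + I (k+1) / I k"

lemma floor_R: "\<lfloor>R k\<rfloor> = aE (k+1)"
proof -
  have "0 < I (k+1) / I k" "I (k+1) / I k < 1" using I_pos[of k] I_pos[of "k+1"] I_lt[of k] by auto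
  then show ?thesis unfolding R_def by (intro floor_unique) auto
qed

lemma cf_rem_e: "cf_rem (exp 1) (Suc k) = R k"
proof (induction k)
  case 0
  have fl: "\<lfloor>exp (1::real)\<rfloor> = 2"
    using I_pos[of 0] I_pos[of 1] unfolding I0 I1 by (intro floor_unique) auto
  have "cf_rem (exp 1) (Suc 0) = 1 / (exp 1 - 2)" by (simp add: fl)
  also have "\<dots> = R 0"
  proof -
    have "aE 1 = 1" by (simp add: aE_def)
    moreover have "exp (1::real) - 2 \<noteq> 0" using I_pos[of 0] I0 by simp
    ultimately show ?thesis unfolding R_def I0 using I1 by (simp add: field_simps)
  qed
  finally show ?case .
next
  case (Suc k)
  have "cf_rem (exp 1) (Suc (Suc k)) = 1 / (R k - of_int \<lfloor>R k\<rfloor>)" using Suc by simp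
  also have "\<dots> = I k / I (k+1)" unfolding floor_R by (simp add: R_def)
  also have "\<dots> = R (Suc k)"
    using I_rec[of k] I_pos[of "k+1"] unfolding R_def by (simp add: field_simps)
  finally show ?case .
qed

lemma cf_a_e: "cf_a (exp 1) k = aE k"
proof (cases k)
  case 0
  have "\<lfloor>exp (1::real)\<rfloor> = 2"
    using I_pos[of 0] I_pos[of 1] unfolding I0 I1 by (intro floor_unique) auto
  then show ?thesis using 0 by (simp add: cf_a_def aE_def)
next
  case (Suc j)
  then show ?thesis unfolding cf_a_def Suc cf_rem_e floor_R by simp
qed




abbreviation "ee \<equiv> exp (1::real)"

lemma T0: "cf_t ee 0 = 1" by simp
lemma T1: "cf_t ee (Suc 0) = 1" by (simp add: cf_a_e aE_def)
lemma T_rec: "cf_t ee (Suc (Suc k)) = aE (k+2) * cf_t ee (Suc k) + cf_t ee k"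
  by (simp add: cf_a_e)
lemma S0: "cf_s ee 0 = 2" by (simp add: cf_a_e aE_def)
lemma S1: "cf_s ee (Suc 0) = 3" by (simp add: cf_a_e aE_def)
lemma S_rec: "cf_s ee (Suc (Suc k)) = aE (k+2) * cf_s ee (Suc k) + cf_s ee k"
  by (simp add: cf_a_e)

lemma T_pos: "cf_t ee k > 0"
proof -
  have "cf_t ee k > 0 \<and> cf_t ee (Suc k) > 0"
  proof (induction k)
    case 0 then show ?case by (simp only: T0 T1) simp
  next
    case (Suc k)
    then show ?case using aE_ge1[of "k+2"] unfolding T_rec
      by (simp add: add_pos_pos mult_pos_pos)
  qed
  then show ?thesis by blast
qed

lemma det: "cf_s ee (Suc k) * cf_t ee k - cf_s ee k * cf_t ee (Suc k) = (-1)^k"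
proof (induction k)
  case 0 then show ?case by (simp add: S0 S1 T1)
next
  case (Suc k)
  then show ?case unfolding S_rec T_rec by (simp add: algebra_simps)
qed

lemma cop_lin: "(a::int) * x + b * y = 1 \<Longrightarrow> coprime x y"
proof (rule coprimeI)
  fix c assume "a * x + b * y = 1" "c dvd x" "c dvd y"
  have "c dvd a * x + b * y" using \<open>c dvd x\<close> \<open>c dvd y\<close> by simp
  with \<open>a * x + b * y = 1\<close> show "is_unit c" by metis
qed

lemma cop_T: "coprime (cf_t ee k) (cf_t ee (Suc k))"
proof (rule cop_lin)
  have "((-1)^k * cf_s ee (Suc k)) * cf_t ee k + ((-1)^(Suc k) * cf_s ee k) * cf_t ee (Suc k)
      = (-1)^k * (cf_s ee (Suc k) * cf_t ee k - cf_s ee k * cf_t ee (Suc k))" by (simp add: algebra_simps)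
  also have "\<dots> = 1" unfolding det by (simp flip: power_mult_distrib)
  finally show "((-1)^k * cf_s ee (Suc k)) * cf_t ee k + ((-1)^(Suc k) * cf_s ee k) * cf_t ee (Suc k) = 1" .
qed

definition tt :: "int list" where
  "tt = [1,1,3,4,7,0,7,7,1,0,1,0, 1,1,3,4,7,0,7,7,1,0,1,0]"
definition att :: "int list" where
  "att = [1,1,2,1,1,4,1,1,6,1,1,0, 1,1,2,1,1,4,1,1,6,1,1,0]"
definition kt :: "int list" where
  "kt = [1,1,1,1,1,1,-1,-1,-1,-1,-1,-1,-1,-1,-1,-1,-1,-1,1,1,1,1,1,1]"
definition jt :: "int option list" where
  "jt = [Some 1, Some 1, Some (-1), None, Some (-1), None, Some (-1), Some (-1), Some (-1), None, Some (-1), None,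
         Some (-1), Some (-1), Some 1, None, Some 1, None, Some 1, Some 1, Some 1, None, Some 1, None]"
definition chi :: "int \<Rightarrow> int" where "chi t = (if t mod 4 = 1 then 1 else -1)"

lemma F1: "\<forall>r\<in>set [0..<24]. tt!((r+2) mod 24) = (att!((r+2) mod 24) * tt!((r+1) mod 24) + tt!r) mod 8"
  unfolding tt_def att_def by code_simp

lemma F2: "\<forall>r\<in>set [0..<24]. kt!((r+1) mod 24) =
   (if odd (tt!((r+1) mod 24)) \<and> odd (tt!((r+2) mod 24)) then psi (tt!((r+1) mod 24)) (tt!((r+2) mod 24)) else 1) * kt!r"
  unfolding tt_def kt_def psi_def by code_simp

lemma F3: "\<forall>r\<in>set [0..<24]. even (tt!r) \<longrightarrow> tt!r mod 4 = 0"
  unfolding tt_def by code_simp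

lemma F4: "\<forall>r\<in>set [0..<24]. jt!((r+1) mod 24) = (if even (tt!((r+1) mod 24)) then None else
    Some ((if even r then 1 else chi (tt!((r+1) mod 24))) * kt!r))"
  unfolding tt_def kt_def jt_def chi_def by code_simp

lemma F5: "\<forall>L\<in>set [1..<24]. \<exists>k\<in>set [0..<24]. jt!k \<noteq> jt!((k+L) mod 24)"
  unfolding jt_def by code_simp

lemma F0: "\<forall>r\<in>set [0..<24]. att!r = (if r mod 3 = 2 then 2*int(r div 3+1) mod 8 else 1)"
  unfolding att_def by code_simp

lemma in24: "(k::nat) mod 24 \<in> set [0..<24]" by simp

lemma modlin: "((a::int)*b + c) mod m = ((a mod m)*(b mod m) + c mod m) mod m"
proof -
  have "((a mod m)*(b mod m) + c mod m) mod m = ((a mod m)*(b mod m) + c) mod m" by (rule mod_add_right_eq)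
  also have "\<dots> = ((a mod m)*(b mod m) mod m + c) mod m" by (rule mod_add_left_eq[symmetric])
  also have "(a mod m)*(b mod m) mod m = a*b mod m" by (rule mod_mult_eq)
  also have "(a*b mod m + c) mod m = (a*b + c) mod m" by (rule mod_add_left_eq)
  finally show ?thesis by simp
qed

lemma aEmod: assumes "k \<ge> 1" shows "aE k mod 8 = att ! (k mod 24)"
proof -
  define r where "r = k mod 24"
  define q where "q = k div 24"
  have kq: "k = r + (8*q)*3" unfolding r_def q_def by simp
  have k3: "k mod 3 = r mod 3" "k div 3 = 8*q + r div 3"
    by (subst kq, simp only: mod_mult_self1) (subst kq, simp)
  have a: "att ! r = (if r mod 3 = 2 then 2*int(r div 3+1) mod 8 else 1)"
    using F0 in24[of k] unfolding r_def by blast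
  show ?thesis
  proof (cases "k mod 3 = 2")
    case True
    have "aE k = 2 * int (8*q + r div 3 + 1)" using True assms k3 by (simp add: aE_def)
    also have "\<dots> = 2 * int (r div 3 + 1) + (2 * int q) * 8" by simp
    finally have eq: "aE k = 2 * int (r div 3 + 1) + (2 * int q) * 8" .
    have "aE k mod 8 = 2 * int (r div 3 + 1) mod 8" unfolding eq by (rule mod_mult_self1)
    then show ?thesis using a True k3 unfolding r_def by simp
  next
    case False
    then show ?thesis using a assms k3 unfolding r_def by (simp add: aE_def)
  qed
qed

lemma Tmod: "cf_t ee k mod 8 = tt ! (k mod 24)"
proof -
  have "cf_t ee k mod 8 = tt ! (k mod 24) \<and> cf_t ee (Suc k) mod 8 = tt ! (Suc k mod 24)"
  proof (induction k)
    case 0 then show ?case by (simp only: T0 T1) (simp add: tt_def)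
  next
    case (Suc k)
    define r where "r = k mod 24"
    have r1: "Suc k mod 24 = (r+1) mod 24" "Suc (Suc k) mod 24 = (r+2) mod 24" unfolding r_def by (simp_all add: mod_Suc_eq mod_Suc_Suc_eq)
    have "cf_t ee (Suc (Suc k)) mod 8 = ((aE (k+2) mod 8) * (cf_t ee (Suc k) mod 8) + cf_t ee k mod 8) mod 8"
      unfolding T_rec by (rule modlin)
    also have "\<dots> = (att!((r+2) mod 24) * tt!((r+1) mod 24) + tt!r) mod 8"
      using Suc.IH aEmod[of "k+2"] r1 unfolding r_def by simp
    also have "\<dots> = tt!((r+2) mod 24)" using F1 in24[of k] unfolding r_def by metis
    finally show ?case using Suc.IH r1 by simp
  qed
  then show ?thesis by blast
qed

lemma even_mod8: "even (a::int) \<longleftrightarrow> even (a mod 8)" by (simp add: even_iff_mod_2_eq_zero mod_mod_cancel)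

lemma psi_mod8: "psi a b = psi (a mod 8) (b mod 8)"
  by (simp add: psi_def mod_mod_cancel)

lemma chi_mod8: "chi a = chi (a mod 8)"
  by (simp add: chi_def mod_mod_cancel)

definition KK :: "nat \<Rightarrow> int" where "KK k = Kp (cf_t ee k) (cf_t ee (Suc k))"

lemma Kmod: "KK k = kt ! (k mod 24)"
proof (induction k)
  case 0 then show ?case by (simp only: KK_def T0 T1) (simp add: Kp_def kt_def)
next
  case (Suc k)
  define r where "r = k mod 24"
  have r1: "Suc k mod 24 = (r+1) mod 24" "Suc (Suc k) mod 24 = (r+2) mod 24" unfolding r_def by (simp_all add: mod_Suc_eq mod_Suc_Suc_eq)
  let ?x = "cf_t ee k" and ?y = "cf_t ee (Suc k)" and ?z = "cf_t ee (Suc (Suc k))"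
  have ev: "even ?y \<Longrightarrow> ?y mod 4 = 0"
  proof -
    assume "even ?y"
    then have "even (tt!((r+1) mod 24))" using Tmod[of "Suc k"] r1 even_mod8[of ?y] by simp
    then have "tt!((r+1) mod 24) mod 4 = 0" using F3 by simp
    then show "?y mod 4 = 0" using Tmod[of "Suc k"] r1 by (metis mod_mod_cancel dvd_triv_right num_double numeral_mult)
  qed
  have st: "KK (Suc k) = (if odd ?y \<and> odd ?z then psi ?y ?z else 1) * KK k"
    unfolding KK_def
    by (rule K_step[OF T_pos T_pos T_rec[of k]]) (use aE_ge1[of "k+2"] cop_T ev in auto)
  have o1: "odd ?y \<longleftrightarrow> odd (tt!((r+1) mod 24))" using Tmod[of "Suc k"] r1 even_mod8[of ?y] by simp
  have o2: "odd ?z \<longleftrightarrow> odd (tt!((r+2) mod 24))" using Tmod[of "Suc (Suc k)"] r1 even_mod8[of ?z] by simp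
  have p: "psi ?y ?z = psi (tt!((r+1) mod 24)) (tt!((r+2) mod 24))"
    using psi_mod8[of ?y ?z] Tmod[of "Suc k"] Tmod[of "Suc (Suc k)"] r1 by simp
  have "KK (Suc k) = (if odd (tt!((r+1) mod 24)) \<and> odd (tt!((r+2) mod 24))
        then psi (tt!((r+1) mod 24)) (tt!((r+2) mod 24)) else 1) * kt!r"
    using st o1 o2 p Suc.IH unfolding r_def by simp
  also have "\<dots> = kt!((r+1) mod 24)" using F2 in24[of k] unfolding r_def by metis
  finally show ?case using r1 by simp
qed

lemma Jmod: "jacobi_seq ee k = jt ! (k mod 24)"
proof (cases k)
  case 0
  then show ?thesis by (simp only: jacobi_seq_def S0 T0) (simp add: jac_sym_def jt_def)
next
  case (Suc j)
  define r where "r = j mod 24"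
  have r1: "Suc j mod 24 = (r+1) mod 24" unfolding r_def by (simp add: mod_Suc_eq)
  have er: "even j \<longleftrightarrow> even r" unfolding r_def by (simp add: even_iff_mod_2_eq_zero mod_mod_cancel)
  let ?t = "cf_t ee (Suc j)"
  have tm: "?t mod 8 = tt!((r+1) mod 24)" using Tmod[of "Suc j"] r1 by simp
  have f4: "jt!((r+1) mod 24) = (if even (tt!((r+1) mod 24)) then None else
    Some ((if even r then 1 else chi (tt!((r+1) mod 24))) * kt!r))"
    using F4 in24[of j] unfolding r_def by blast
  show ?thesis
  proof (cases "even ?t")
    case True
    then have "even (tt!((r+1) mod 24))" using tm even_mod8[of ?t] by simp
    then show ?thesis using True f4 r1 Suc by (simp add: jacobi_seq_def jac_sym_def)
  next
    case False
    then have ot: "odd (tt!((r+1) mod 24))" using tm even_mod8[of ?t] by simp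
    have jd: "jacobi (cf_s ee (Suc j)) ?t = jacobi ((-1)^j) ?t * jacobi (cf_t ee j) ?t"
      by (rule J_det[OF T_pos False T_pos cop_T det])
    have k: "jacobi (cf_t ee j) ?t = kt!r" using Kmod[of j] False unfolding KK_def Kp_def r_def by simp
    have m: "jacobi ((-1)^j) ?t = (if even r then 1 else chi (tt!((r+1) mod 24)))"
    proof (cases "even j")
      case True then show ?thesis using er jacI_one[OF T_pos] by simp
    next
      case False
      then have "jacobi ((-1)^j) ?t = jacobi (-1) ?t" by simp
      also have "\<dots> = chi ?t" using jacI_neg1[OF T_pos] \<open>odd ?t\<close> by (simp add: chi_def)
      also have "\<dots> = chi (tt!((r+1) mod 24))" using chi_mod8[of ?t] tm by simp
      finally show ?thesis using er False by simp
    qed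
    show ?thesis using f4 ot jd k m False r1 Suc by (simp add: jacobi_seq_def jac_sym_def)
  qed
qed

theorem theorem1:
  shows "(\<forall>k. jacobi_seq (exp 1) k = jacobi_seq (exp 1) (k + 24)) \<and>
         (\<forall>L::nat. L > 0 \<longrightarrow> (\<forall>k. jacobi_seq (exp 1) k = jacobi_seq (exp 1) (k + L)) \<longrightarrow> 24 \<le> L)"
proof (intro conjI allI impI)
  fix k show "jacobi_seq (exp 1) k = jacobi_seq (exp 1) (k + 24)" unfolding Jmod by simp
next
  fix L :: nat assume L: "L > 0" "\<forall>k. jacobi_seq (exp 1) k = jacobi_seq (exp 1) (k + L)"
  show "24 \<le> L"
  proof (rule ccontr)
    assume "\<not> 24 \<le> L"
    then have "L \<in> set [1..<24]" using L(1) by simp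
    then obtain k where k: "k \<in> set [0..<24]" "jt!k \<noteq> jt!((k+L) mod 24)" using F5 by blast
    have "jacobi_seq (exp 1) k = jacobi_seq (exp 1) (k + L)" using L(2) by blast
    then show False using k unfolding Jmod by simp
  qed
qed


end
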